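(* Fix a sequence $(d_n)_{n\ge 0}$ of non-zero complex numbers (the "denominators"). Let $M=(M(n,k))_{n,k\ge 0}$ be an infinite lower triangular complex matrix with all diagonal entries equal to $1$ (a unipotent matrix), and suppose $M$ is the matrix of a substitution with prefunction, i.e. there exist formal power series $g(x),\phi(x)\in\mathbf{C}[[x]]$ with $\phi(0)=0$ such that for every $k\ge 0$ $$\sum_{n\ge 0} M(n,k)\frac{x^n}{d_n}=g(x)\frac{\phi(x)^k}{d_k}.$$ Write $M=I+N$ and, for $t\in\mathbf{C}$, define $M^t=\sum_{j\ge 0}\binom{t}{j}N^j$, where $\binom{t}{j}=\frac{t(t-1)\cdots(t-j+1)}{j!}$. Then for every $t\in\mathbf{C}$, $M^t$ is again the matrix of a substitution with prefunction, i.e. there exist formal power series $g_t,\phi_t\in\mathbf{C}[[x]]$ with $\phi_t(0)=0$ such that $\sum_{n\ge0}M^t(n,k)\frac{x^n}{d_n}=g_t(x)\frac{\phi_t(x)^k}{d_k}$ for all $k\ge 0$.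
   Context: Since $N=M-I$ is strictly lower triangular, each entry of $N^j$ in row $n$ vanishes for $j>n$, so each entry $M^t(n,k)$ is a finite sum (a polynomial in $t$); $M^t$ is lower triangular with ones on the diagonal and satisfies $M^{t_1+t_2}=M^{t_1}M^{t_2}$. The matrix $M$ acts on sequences $(a_k)$ by $b_n=\sum_k M(n,k)a_k$; through the denominators $(d_n)$ a sequence $(a_n)$ is identified with the series $\sum_n a_n x^n/d_n$, and a matrix of the stated form corresponds to the transformation $f(x)\mapsto g(x)f(\phi(x))$. *)

theory Defs
  imports Complex_Main "HOL-Computational_Algebra.Formal_Power_Series"
begin

type_synonym cmat = "nat \<Rightarrow> nat \<Rightarrow> complex"

definition lower_triangular :: "cmat \<Rightarrow> bool" where
  "lower_triangular A \<longleftrightarrow> (\<forall>n k. n < k \<longrightarrow> A n k = 0)"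

definition unipotent :: "cmat \<Rightarrow> bool" where
  "unipotent A \<longleftrightarrow> lower_triangular A \<and> (\<forall>n. A n n = 1)"

definition id_mat :: cmat where
  "id_mat n k = (if n = k then 1 else 0)"

(* Product of infinite matrices where the left factor is lower triangular:
   (A B)(n,k) = sum_j A(n,j) B(j,k), and A(n,j) = 0 for j > n. *)
definition lt_mult :: "cmat \<Rightarrow> cmat \<Rightarrow> cmat" where
  "lt_mult A B n k = (\<Sum>j\<le>n. A n j * B j k)"

primrec lt_pow :: "cmat \<Rightarrow> nat \<Rightarrow> cmat" where
  "lt_pow A 0 = id_mat"
| "lt_pow A (Suc j) = lt_mult A (lt_pow A j)"

(* M^t = sum_{j>=0} (t choose j) N^j with N = M - I; since N is strictly lower
   triangular, the (n,k) entry of N^j vanishes for j > n, so the sum is finite. *)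
definition mat_power_t :: "cmat \<Rightarrow> complex \<Rightarrow> cmat" where
  "mat_power_t M t n k =
     (\<Sum>j\<le>n. (t gchoose j) * lt_pow (\<lambda>a b. M a b - id_mat a b) j n k)"

definition subst_prefun :: "(nat \<Rightarrow> complex) \<Rightarrow> cmat \<Rightarrow> bool" where
  "subst_prefun d M \<longleftrightarrow>
     (\<exists>g \<phi> :: complex fps. fps_nth \<phi> 0 = 0 \<and>
        (\<forall>k. Abs_fps (\<lambda>n. M n k / d n) = fps_const (1 / d k) * g * \<phi> ^ k))"

end

theory Submission imports Defs "HOL-Computational_Algebra.Polynomial" begin
unbundle fps_syntax

lemma coeff_subst:
  assumes "subst_prefun d A" "\<forall>n. d n \<noteq> 0"
  obtains g \<phi> :: "complex fps" where "\<phi> $ 0 = 0"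
    "\<And>n k. (g * \<phi>^k) $ n = d k * A n k / d n"
    "\<And>k. Abs_fps (\<lambda>n. A n k / d n) = fps_const (1 / d k) * g * \<phi> ^ k"
proof -
  obtain g \<phi> :: "complex fps" where p0: "\<phi> $ 0 = 0" and h: "\<And>k. Abs_fps (\<lambda>n. A n k / d n) = fps_const (1 / d k) * g * \<phi> ^ k"
    using assms(1) unfolding subst_prefun_def by blast
  have "(g * \<phi>^k) $ n = d k * A n k / d n" for n k
  proof -
    have "A n k / d n = (fps_const (1 / d k) * (g * \<phi> ^ k)) $ n"
      using arg_cong[OF h[of k], of "\<lambda>f. f $ n"] by (simp add: mult.assoc)
    hence "A n k / d n = (g * \<phi> ^ k) $ n / d k" by simp
    thus ?thesis using assms(2) by (simp add: field_simps)
  qed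
  thus thesis using that p0 h by blast
qed

lemma comp_coeff:
  fixes g p c :: "complex fps"
  assumes p0: "p $ 0 = 0"
  shows "(g * (c oo p)) $ n = (\<Sum>j\<le>n. c $ j * (g * p^j) $ n)"
proof -
  have z: "(p^j) $ i = 0" if "i < j" for i j using startsby_zero_power_prefix[OF p0] that by blast
  have "(g * (c oo p)) $ n = (\<Sum>i=0..n. g $ i * (\<Sum>j=0..n-i. c $ j * (p^j) $ (n-i)))"
    by (simp add: fps_mult_nth fps_compose_nth)
  also have "\<dots> = (\<Sum>i=0..n. g $ i * (\<Sum>j=0..n. c $ j * (p^j) $ (n-i)))"
  proof (rule sum.cong[OF refl])
    fix i assume "i \<in> {0..n}"
    have "(\<Sum>j=0..n-i. c $ j * (p^j) $ (n-i)) = (\<Sum>j=0..n. c $ j * (p^j) $ (n-i))"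
      by (rule sum.mono_neutral_left) (auto simp: z)
    thus "g $ i * (\<Sum>j=0..n-i. c $ j * (p^j) $ (n-i)) = g $ i * (\<Sum>j=0..n. c $ j * (p^j) $ (n-i))" by simp
  qed
  also have "\<dots> = (\<Sum>j=0..n. c $ j * (\<Sum>i=0..n. g $ i * (p^j) $ (n-i)))"
    unfolding sum_distrib_left by (subst sum.swap) (simp add: mult_ac)
  also have "\<dots> = (\<Sum>j\<le>n. c $ j * (g * p^j) $ n)"
    by (simp add: fps_mult_nth atLeast0AtMost)
  finally show ?thesis .
qed

lemma subst_mult:
  assumes d: "\<forall>n. d n \<noteq> 0" and A: "subst_prefun d A" and B: "subst_prefun d B"
  shows "subst_prefun d (lt_mult A B)"
proof -
  obtain ga pa where pa0: "pa $ 0 = 0" and ca: "\<And>n k. (ga * pa^k) $ n = d k * A n k / d n"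
    using coeff_subst[OF A d] by metis
  obtain gb pb where pb0: "pb $ 0 = 0" and hb: "\<And>k. Abs_fps (\<lambda>n. B n k / d n) = fps_const (1 / d k) * gb * pb ^ k"
    using coeff_subst[OF B d] by metis
  show ?thesis unfolding subst_prefun_def
  proof (intro exI conjI allI)
    show "(pb oo pa) $ 0 = 0" using pb0 by simp
    fix k
    have "fps_const (1 / d k) * (ga * (gb oo pa)) * (pb oo pa) ^ k
        = ga * ((fps_const (1 / d k) * gb * pb ^ k) oo pa)"
      by (simp add: fps_compose_mult_distrib[OF pa0] fps_compose_power[OF pa0] mult_ac)
    also have "\<dots> = ga * (Abs_fps (\<lambda>n. B n k / d n) oo pa)" by (simp add: hb)
    also have "\<dots> = Abs_fps (\<lambda>n. lt_mult A B n k / d n)"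
    proof (rule fps_ext)
      fix n
      have "(ga * (Abs_fps (\<lambda>n. B n k / d n) oo pa)) $ n = (\<Sum>j\<le>n. B j k / d j * (d j * A n j / d n))"
        by (simp add: comp_coeff[OF pa0] ca)
      also have "\<dots> = lt_mult A B n k / d n"
        unfolding lt_mult_def sum_divide_distrib using d by (intro sum.cong) (auto simp: field_simps)
      finally show "(ga * (Abs_fps (\<lambda>n. B n k / d n) oo pa)) $ n = Abs_fps (\<lambda>n. lt_mult A B n k / d n) $ n" by simp
    qed
    finally show "Abs_fps (\<lambda>n. lt_mult A B n k / d n) = fps_const (1 / d k) * (ga * (gb oo pa)) * (pb oo pa) ^ k" by simp
  qed
qed

lemma subst_id:
  assumes d: "\<forall>n. d n \<noteq> 0"
  shows "subst_prefun d id_mat"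
  unfolding subst_prefun_def
proof (intro exI conjI allI)
  show "(fps_X::complex fps) $ 0 = 0" by simp
  fix k
  show "Abs_fps (\<lambda>n. id_mat n k / d n) = fps_const (1 / d k) * 1 * fps_X ^ k"
    by (rule fps_ext) (simp add: id_mat_def fps_X_power_iff)
qed

definition Nm :: "cmat \<Rightarrow> cmat" where "Nm M = (\<lambda>a b. M a b - id_mat a b)"

lemma Nm_zero: "unipotent M \<Longrightarrow> a < Suc b \<Longrightarrow> Nm M a b = 0"
  unfolding Nm_def unipotent_def lower_triangular_def id_mat_def
  by (cases "a = b") auto

lemma Npow_zero: "unipotent M \<Longrightarrow> a < b + j \<Longrightarrow> lt_pow (Nm M) j a b = 0"
proof (induction j arbitrary: a)
  case 0 thus ?case by (simp add: id_mat_def)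
next
  case (Suc j)
  have "Nm M a i * lt_pow (Nm M) j i b = 0" if "i \<le> a" for i
  proof (cases "i < a")
    case True thus ?thesis using Suc.IH[of i] Suc.prems by simp
  next
    case False thus ?thesis using Nm_zero[OF Suc.prems(1), of a i] that by simp
  qed
  thus ?case unfolding lt_pow.simps lt_mult_def by (intro sum.neutral) auto
qed

lemma mpt_ext: "unipotent M \<Longrightarrow> n \<le> m \<Longrightarrow>
   mat_power_t M t n k = (\<Sum>j\<le>m. (t gchoose j) * lt_pow (Nm M) j n k)"
  unfolding mat_power_t_def Nm_def[symmetric]
  by (rule sum.mono_neutral_left) (auto simp: Npow_zero)

lemma mpt_0: "unipotent M \<Longrightarrow> mat_power_t M 0 = id_mat"
proof (intro ext)
  fix n k assume u: "unipotent M"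
  have "mat_power_t M 0 n k = (\<Sum>j\<le>n. (if j = 0 then lt_pow (Nm M) j n k else 0))"
    unfolding mat_power_t_def Nm_def[symmetric] by (intro sum.cong) (auto simp: gbinomial_0_left)
  also have "\<dots> = id_mat n k" by (simp add: sum.delta)
  finally show "mat_power_t M 0 n k = id_mat n k" .
qed

lemma mpt_Suc: assumes u: "unipotent M"
  shows "mat_power_t M (t + 1) = lt_mult M (mat_power_t M t)"
proof (intro ext)
  fix n k
  let ?P = "lt_pow (Nm M)"
  have Mi: "M n i = id_mat n i + Nm M n i" for i by (simp add: Nm_def)
  have "lt_mult M (mat_power_t M t) n k = (\<Sum>i\<le>n. id_mat n i * mat_power_t M t i k)
      + (\<Sum>i\<le>n. Nm M n i * mat_power_t M t i k)"
    unfolding lt_mult_def Mi by (simp add: distrib_right sum.distrib)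
  also have "(\<Sum>i\<le>n. id_mat n i * mat_power_t M t i k) = mat_power_t M t n k"
  proof -
    have "(\<Sum>i\<le>n. id_mat n i * mat_power_t M t i k) = (\<Sum>i\<le>n. if n = i then mat_power_t M t i k else 0)"
      by (intro sum.cong) (auto simp: id_mat_def)
    thus ?thesis by (simp add: sum.delta)
  qed
  also have "(\<Sum>i\<le>n. Nm M n i * mat_power_t M t i k)
      = (\<Sum>i\<le>n. Nm M n i * (\<Sum>j\<le>n. (t gchoose j) * ?P j i k))"
    by (intro sum.cong refl) (simp add: mpt_ext[OF u])
  also have "\<dots> = (\<Sum>j\<le>n. (t gchoose j) * ?P (Suc j) n k)"
  proof -
    have "(\<Sum>i\<le>n. Nm M n i * (\<Sum>j\<le>n. (t gchoose j) * ?P j i k))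
       = (\<Sum>i\<le>n. \<Sum>j\<le>n. (t gchoose j) * (Nm M n i * ?P j i k))"
      by (simp only: sum_distrib_left mult.left_commute)
    also have "\<dots> = (\<Sum>j\<le>n. \<Sum>i\<le>n. (t gchoose j) * (Nm M n i * ?P j i k))"
      by (rule sum.swap)
    also have "\<dots> = (\<Sum>j\<le>n. (t gchoose j) * ?P (Suc j) n k)"
      by (simp only: lt_pow.simps lt_mult_def sum_distrib_left)
    finally show ?thesis .
  qed
  finally have R: "lt_mult M (mat_power_t M t) n k = mat_power_t M t n k + (\<Sum>j\<le>n. (t gchoose j) * ?P (Suc j) n k)" .
  define S1 where "S1 = (\<Sum>j\<le>n. (t gchoose j) * ?P (Suc j) n k)"
  define S2 where "S2 = (\<Sum>j\<le>n. (t gchoose Suc j) * ?P (Suc j) n k)"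
  have "mat_power_t M (t+1) n k = (\<Sum>j\<le>Suc n. ((t+1) gchoose j) * ?P j n k)"
    by (rule mpt_ext[OF u]) simp
  also have "\<dots> = ?P 0 n k + S1 + S2"
    unfolding sum.atMost_Suc_shift gbinomial_Suc_Suc S1_def S2_def by (simp add: distrib_right sum.distrib)
  finally have L1: "mat_power_t M (t+1) n k = ?P 0 n k + S1 + S2" .
  have "?P 0 n k + S2 = (\<Sum>j\<le>Suc n. (t gchoose j) * ?P j n k)"
    unfolding sum.atMost_Suc_shift S2_def by simp
  also have "\<dots> = mat_power_t M t n k" by (rule mpt_ext[OF u, symmetric]) simp
  finally have L2: "?P 0 n k + S2 = mat_power_t M t n k" .
  have "mat_power_t M (t+1) n k = (?P 0 n k + S2) + S1" unfolding L1 by (simp add: ac_simps)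
  thus "mat_power_t M (t + 1) n k = lt_mult M (mat_power_t M t) n k" unfolding L2 R S1_def .
qed

lemma mpt_nat: assumes d: "\<forall>n. d n \<noteq> 0" and u: "unipotent M" and s: "subst_prefun d M"
  shows "subst_prefun d (mat_power_t M (of_nat m))"
proof (induction m)
  case 0 thus ?case using mpt_0[OF u] subst_id[OF d] by simp
next
  case (Suc m)
  thus ?case using mpt_Suc[OF u, of "of_nat m"] subst_mult[OF d s] by (simp add: add.commute)
qed

definition Gf :: "(nat \<Rightarrow> complex) \<Rightarrow> cmat \<Rightarrow> nat \<Rightarrow> complex fps" where
  "Gf d A k = Abs_fps (\<lambda>n. d k * A n k / d n)"

lemma Gf_ident: assumes d: "\<forall>n. d n \<noteq> 0" and s: "subst_prefun d A"
  shows "Gf d A k * Gf d A 0 ^ k = Gf d A 0 * Gf d A 1 ^ k"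
proof -
  obtain g p where c: "\<And>n k. (g * p^k) $ n = d k * A n k / d n"
    using coeff_subst[OF s d] by metis
  have G: "Gf d A k = g * p^k" for k unfolding Gf_def by (rule fps_ext) (simp add: c)
  show ?thesis unfolding G by (simp add: power_mult_distrib mult_ac)
qed

lemma ident_subst: assumes d: "\<forall>n. d n \<noteq> 0" and a00: "A 0 0 = 1" and a01: "A 0 1 = 0"
  and I: "\<And>k. Gf d A k * Gf d A 0 ^ k = Gf d A 0 * Gf d A 1 ^ k"
  shows "subst_prefun d A"
  unfolding subst_prefun_def
proof (intro exI conjI allI)
  let ?G = "Gf d A"
  have g0: "?G 0 $ 0 \<noteq> 0" using a00 d by (simp add: Gf_def)
  have inv: "?G 0 * inverse (?G 0) = 1" by (rule inverse_mult_eq_1'[OF g0])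
  show "(?G 1 * inverse (?G 0)) $ 0 = 0" using a01 by (simp add: Gf_def)
  fix k
  have "?G k = ?G k * (?G 0 * inverse (?G 0)) ^ k" by (simp add: inv)
  also have "\<dots> = (?G k * ?G 0 ^ k) * inverse (?G 0) ^ k" by (simp add: power_mult_distrib mult_ac)
  also have "\<dots> = ?G 0 * (?G 1 * inverse (?G 0)) ^ k" by (simp add: I power_mult_distrib mult_ac)
  finally have e: "?G k = ?G 0 * (?G 1 * inverse (?G 0)) ^ k" .
  show "Abs_fps (\<lambda>n. A n k / d n) = fps_const (1 / d k) * ?G 0 * (?G 1 * inverse (?G 0)) ^ k"
    unfolding mult.assoc e[symmetric] using d by (intro fps_ext) (simp add: Gf_def)
qed

definition gp :: "nat \<Rightarrow> complex poly" where
  "gp j = smult (1 / fact j) (\<Prod>i=0..<j. [:- of_nat i, 1:])"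

lemma poly_gp: "poly (gp j) t = t gchoose j"
  by (simp add: gp_def poly_prod gbinomial_prod_rev field_simps)

definition ev :: "complex \<Rightarrow> complex poly fps \<Rightarrow> complex fps" where
  "ev t F = Abs_fps (\<lambda>n. poly (F $ n) t)"

lemma ev_mult: "ev t (F * G) = ev t F * ev t G"
  by (rule fps_ext) (simp add: ev_def fps_mult_nth poly_sum)

lemma ev_one: "ev t 1 = 1"
  by (rule fps_ext) (simp add: ev_def)

lemma ev_power: "ev t (F ^ k) = ev t F ^ k"
  by (induction k) (simp_all add: ev_one ev_mult)

lemma ev_diff: "ev t (F - G) = ev t F - ev t G"
  by (rule fps_ext) (simp add: ev_def)

definition GP :: "(nat \<Rightarrow> complex) \<Rightarrow> cmat \<Rightarrow> nat \<Rightarrow> complex poly fps" where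
  "GP d M k = Abs_fps (\<lambda>n. smult (d k / d n) (\<Sum>j\<le>n. smult (lt_pow (Nm M) j n k) (gp j)))"

lemma ev_GP: "ev t (GP d M k) = Gf d (mat_power_t M t) k"
  unfolding ev_def GP_def Gf_def mat_power_t_def Nm_def[symmetric]
  by (rule fps_ext) (simp add: poly_sum poly_gp sum_distrib_left sum_divide_distrib mult_ac)

lemma poly_zero_nat: assumes "\<And>m::nat. poly p (of_nat m) = (0::complex)" shows "p = 0"
proof (rule ccontr)
  assume "p \<noteq> 0"
  hence "finite {x. poly p x = 0}" by (rule poly_roots_finite)
  moreover have "range (of_nat :: nat \<Rightarrow> complex) \<subseteq> {x. poly p x = 0}" using assms by auto
  moreover have "infinite (range (of_nat :: nat \<Rightarrow> complex))"
    by (rule range_inj_infinite) (simp add: inj_def)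
  ultimately show False using finite_subset by blast
qed

theorem mainTheorem1:
  fixes d :: "nat \<Rightarrow> complex" and M :: "nat \<Rightarrow> nat \<Rightarrow> complex"
  assumes "\<forall>n. d n \<noteq> 0"
    and "unipotent M"
    and "subst_prefun d M"
  shows "\<forall>t::complex. subst_prefun d (mat_power_t M t)"
proof
  fix t :: complex
  note d = assms(1) and u = assms(2) and s = assms(3)
  define E where "E k = GP d M k * GP d M 0 ^ k - GP d M 0 * GP d M 1 ^ k" for k
  have evE: "ev x (E k) = Gf d (mat_power_t M x) k * Gf d (mat_power_t M x) 0 ^ k
      - Gf d (mat_power_t M x) 0 * Gf d (mat_power_t M x) 1 ^ k" for x k
    unfolding E_def ev_diff ev_mult ev_power ev_GP ..
  have E0: "E k = 0" for k
  proof (rule fps_ext)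
    fix n
    have "poly (E k $ n) (of_nat m) = 0" for m
    proof -
      have "ev (of_nat m) (E k) = 0"
        unfolding evE using Gf_ident[OF d mpt_nat[OF d u s, of m]] by simp
      thus ?thesis unfolding ev_def by (metis fps_zero_nth fps_nth_Abs_fps)
    qed
    thus "E k $ n = 0 $ n" using poly_zero_nat by simp
  qed
  show "subst_prefun d (mat_power_t M t)"
  proof (rule ident_subst[OF d])
    show "mat_power_t M t 0 0 = 1" by (simp add: mat_power_t_def id_mat_def)
    show "mat_power_t M t 0 1 = 0" by (simp add: mat_power_t_def id_mat_def)
    fix k
    have "ev t (E k) = 0" by (rule fps_ext) (simp add: E0 ev_def)
    thus "Gf d (mat_power_t M t) k * Gf d (mat_power_t M t) 0 ^ k =
          Gf d (mat_power_t M t) 0 * Gf d (mat_power_t M t) 1 ^ k" unfolding evE by simp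
  qed
qed

end
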